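(* Let $q$ be an odd prime power, $p$ its characteristic, $d\ge2$ an integer and $t\in\mathbb{F}_q^{\times}$. Let $\omega$ be a generator of the group of multiplicative characters of $\mathbb{F}_q^{\times}$, $\phi$ the unique character of order $2$, $\zeta_p$ a primitive $p$-th root of unity, and for a character $\chi$ let $g_q(\chi)=\sum_{x\in\mathbb{F}_q^{\times}}\chi(x)\zeta_p^{\mathrm{tr}(x)}$, where $\mathrm{tr}:\mathbb{F}_q\to\mathbb{F}_p$ is the trace. Define $$H_q(t)=\frac{(-1)^d}{1-q}\sum_{m=0}^{q-2}\left(\frac{g_q(\phi\omega^m)\,g_q(\omega^{-m})}{g_q(\phi)}\right)^d\omega\big((-1)^dt\big)^m.$$ Then the number of points $(x_1,\dots,x_d)\in(\mathbb{F}_q^{\times})^d$ on the hypersurface $$X_t:\ \prod_{i=1}^d\left(x_i+2+x_i^{-1}\right)=4^d t^{-1}$$ equals $$\frac{(q-2)^d-(-1)^d}{q-1}-(-1)^dH_q(t).$$ *)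

theory Defs
  imports Complex_Main "HOL-Library.Cardinality"
begin

text \<open>Multiplicative characters of the unit group of a finite field 'a, viewed as
  functions 'a to complex (values at 0 are irrelevant and never used).\<close>
definition mult_char :: "('a::{finite,field} \<Rightarrow> complex) \<Rightarrow> bool" where
  "mult_char \<chi> \<longleftrightarrow> \<chi> 1 = 1 \<and> (\<forall>x y. x \<noteq> 0 \<longrightarrow> y \<noteq> 0 \<longrightarrow> \<chi> (x * y) = \<chi> x * \<chi> y)"

definition char_generator :: "('a::{finite,field} \<Rightarrow> complex) \<Rightarrow> bool" where
  "char_generator \<omega> \<longleftrightarrow> mult_char \<omega> \<and>
     (\<forall>\<chi>. mult_char \<chi> \<longrightarrow> (\<exists>m::nat. \<forall>x. x \<noteq> (0::'a) \<longrightarrow> \<chi> x = \<omega> x ^ m))"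

definition quad_char :: "('a::{finite,field} \<Rightarrow> complex) \<Rightarrow> bool" where
  "quad_char \<phi> \<longleftrightarrow> mult_char \<phi> \<and> (\<exists>x. x \<noteq> (0::'a) \<and> \<phi> x \<noteq> 1) \<and>
     (\<forall>x. x \<noteq> (0::'a) \<longrightarrow> \<phi> x ^ 2 = 1)"

definition field_degree :: "'a::{finite,field} itself \<Rightarrow> nat" where
  "field_degree (x::'a itself) = (THE n. CARD('a) = CHAR('a) ^ n)"

text \<open>Absolute trace F_q to F_p (its values lie in the prime subfield of 'a).\<close>
definition ftrace :: "'a::{finite,field} \<Rightarrow> 'a" where
  "ftrace x = (\<Sum>i<field_degree TYPE('a). x ^ (CHAR('a) ^ i))"

text \<open>zeta_p ^ tr(x): the exponent is the residue k < p with of_nat k = tr x.\<close>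
definition addchar :: "complex \<Rightarrow> 'a::{finite,field} \<Rightarrow> complex" where
  "addchar \<zeta> x = \<zeta> ^ (THE k. k < CHAR('a) \<and> of_nat k = ftrace x)"

definition gauss_sum :: "complex \<Rightarrow> ('a::{finite,field} \<Rightarrow> complex) \<Rightarrow> complex" where
  "gauss_sum \<zeta> \<chi> = (\<Sum>x\<in>UNIV - {0::'a}. \<chi> x * addchar \<zeta> x)"

definition H_q :: "complex \<Rightarrow> ('a::{finite,field} \<Rightarrow> complex) \<Rightarrow> ('a \<Rightarrow> complex) \<Rightarrow> nat \<Rightarrow> 'a \<Rightarrow> complex" where
  "H_q \<zeta> \<omega> \<phi> d t =
     (-1) ^ d / (1 - of_nat CARD('a)) *
     (\<Sum>m<CARD('a) - 1.
        (gauss_sum \<zeta> (\<lambda>x. \<phi> x * \<omega> x ^ m) * gauss_sum \<zeta> (\<lambda>x. inverse (\<omega> x) ^ m)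
           / gauss_sum \<zeta> \<phi>) ^ d
        * \<omega> ((-1) ^ d * t) ^ m)"

end

theory Submission
  imports Defs "HOL-Algebra.Algebraic_Closure_Type" "HOL-Computational_Algebra.Polynomial"
    "HOL-Number_Theory.Cong"
begin
section \<open>Basics on finite fields\<close>

lemma ff_card_ge2: "CARD('a::{finite,field}) \<ge> 2"
proof -
  have "card {0::'a, 1} \<le> card (UNIV::'a set)" by (rule card_mono) auto
  then show ?thesis by simp
qed

lemma ff_char_prime: "prime CHAR('a::{finite,field})"
  using prime_CHAR_semidom finite_imp_CHAR_pos[OF finite_class.finite_UNIV] by blast

lemma ff_char_gt1: "CHAR('a::{finite,field}) > 1"
  using ff_char_prime prime_gt_1_nat by blast

lemma ff_pow_card: "(x::'a::{finite,field}) ^ CARD('a) = x"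
proof (cases "x = 0")
  case False
  have "x * (\<Prod>y\<in>UNIV-{0}. x * y) = x * x ^ (card (UNIV :: 'a set) - 1) * \<Prod>(UNIV-{0})"
    by (simp add: prod.distrib mult_ac)
  also have "x * x ^ (card (UNIV :: 'a set) - 1) = x ^ Suc (card (UNIV :: 'a set) - 1)"
    by (subst power_Suc) auto
  also have "Suc (card (UNIV :: 'a set) - 1) = card (UNIV :: 'a set)"
    using finite_UNIV_card_ge_0[where ?'a = 'a] by simp
  also have "(\<Prod>y\<in>UNIV-{0}. x * y) = (\<Prod>y\<in>UNIV-{0}. y)"
    by (rule prod.reindex_bij_witness[of _ "\<lambda>y. y / x" "\<lambda>y. x * y"]) (use False in auto)
  finally show ?thesis
    by simp
qed (use finite_UNIV_card_ge_0[where ?'a = 'a] in auto)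

lemma ff_pow_card1: "(x::'a::{finite,field}) \<noteq> 0 \<Longrightarrow> x ^ (CARD('a) - 1) = 1"
proof -
  assume x: "x \<noteq> 0"
  obtain k where k: "CARD('a) = Suc k" using ff_card_ge2[where 'a='a] by (cases "CARD('a)") auto
  have "x * x ^ k = x * 1" using ff_pow_card[of x] k by simp
  then have "x ^ k = 1" using x by simp
  then show ?thesis using k by simp
qed

definition addclosed :: "'a::{finite,field} set \<Rightarrow> bool" where
  "addclosed V \<longleftrightarrow> 0 \<in> V \<and> (\<forall>a\<in>V. \<forall>b\<in>V. a + b \<in> V)"

lemma addclosed_ofnat:
  assumes "addclosed V" "a \<in> V" shows "of_nat m * a \<in> V"
proof (induction m)
  case 0 then show ?case using assms by (simp add: addclosed_def)
next
  case (Suc m)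
  have "of_nat (Suc m) * a = a + of_nat m * a" by (simp add: algebra_simps)
  then show ?case using Suc assms by (simp add: addclosed_def)
qed

lemma of_nat_mod_CHAR: "(of_nat (k mod CHAR('a)) :: 'a::{finite,field}) = of_nat k"
  by (simp add: of_nat_eq_iff_cong_CHAR)

lemma addclosed_neg:
  assumes "addclosed V" "(a::'a::{finite,field}) \<in> V" shows "- a \<in> V"
proof -
  have "of_nat (CHAR('a) - 1) * a + a = of_nat CHAR('a) * a"
    using ff_char_gt1[where 'a='a] by (simp add: algebra_simps of_nat_diff)
  then have "of_nat (CHAR('a) - 1) * a + a = 0" by simp
  then have "of_nat (CHAR('a) - 1) * a = - a" by (simp add: eq_neg_iff_add_eq_0)
  then have "- a = of_nat (CHAR('a) - 1) * a" by simp
  then show ?thesis using addclosed_ofnat[OF assms] by simp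
qed

lemma addclosed_extend:
  fixes V :: "'a::{finite,field} set"
  assumes V: "addclosed V" and v: "v \<notin> V"
  defines "W \<equiv> (\<lambda>(a,j). a + of_nat j * v) ` (V \<times> {..<CHAR('a)})"
  shows "addclosed W" "card W = CHAR('a) * card V" "V \<subseteq> W" "v \<in> W"
proof -
  let ?p = "CHAR('a)"
  have p1: "?p > 1" by (rule ff_char_gt1)
  show "V \<subseteq> W"
  proof
    fix a assume "a \<in> V"
    then have "(a,0) \<in> V \<times> {..<?p}" using p1 by auto
    then show "a \<in> W" unfolding W_def by force
  qed
  show "v \<in> W"
  proof -
    have "(0,1) \<in> V \<times> {..<?p}" using p1 V by (auto simp: addclosed_def)
    then show ?thesis unfolding W_def by force
  qed
  show "addclosed W"
    unfolding addclosed_def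
  proof (intro conjI ballI)
    have "(0,0) \<in> V \<times> {..<?p}" using p1 V by (auto simp: addclosed_def)
    then show "0 \<in> W" unfolding W_def by force
  next
    fix x y assume "x \<in> W" "y \<in> W"
    then obtain a j b k where ab: "a \<in> V" "b \<in> V" "j < ?p" "k < ?p"
      and xy: "x = a + of_nat j * v" "y = b + of_nat k * v" unfolding W_def by auto
    have "x + y = (a + b) + of_nat ((j + k) mod ?p) * v"
      unfolding xy of_nat_mod_CHAR by (simp add: algebra_simps)
    moreover have "(a + b, (j + k) mod ?p) \<in> V \<times> {..<?p}"
      using ab V p1 by (auto simp: addclosed_def)
    ultimately show "x + y \<in> W" unfolding W_def by force
  qed
  have inj: "inj_on (\<lambda>(a,j). a + of_nat j * v) (V \<times> {..<?p})"
  proof (rule inj_onI, clarify)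
    fix a j b k assume ab: "a \<in> V" "j < ?p" "b \<in> V" "k < ?p"
      and eq: "a + of_nat j * v = b + of_nat k * v"
    have jk: "j = k"
    proof (rule ccontr)
      assume "j \<noteq> k"
      have key: "\<And>a b j k. a \<in> V \<Longrightarrow> b \<in> V \<Longrightarrow> j < ?p \<Longrightarrow> k < j \<Longrightarrow>
          a + of_nat j * v = b + of_nat k * v \<Longrightarrow> False"
      proof -
        fix a b j k assume h: "a \<in> V" "b \<in> V" "j < ?p" "k < j"
          "a + of_nat j * v = (b + of_nat k * v :: 'a)"
        have "of_nat (j - k) * v = b + - a"
          using h by (simp add: of_nat_diff algebra_simps)
        moreover have "b + - a \<in> V" using h V addclosed_neg[OF V] unfolding addclosed_def by blast
        ultimately have r: "of_nat (j - k) * v \<in> V" by simp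
        have "coprime (j - k) ?p"
          using h ff_char_prime[where 'a='a]
          by (metis coprime_commute diff_le_self le_less_trans prime_imp_coprime zero_less_diff
               dvd_imp_le nat_dvd_not_less)
        then obtain s where s: "[(j - k) * s = Suc 0] (mod ?p)" using cong_solve_coprime_nat by blast
        have "of_nat s * (of_nat (j - k) * v) \<in> V" by (rule addclosed_ofnat[OF V r])
        moreover have "of_nat s * (of_nat (j - k) * v) = (of_nat ((j - k) * s) :: 'a) * v"
          by (simp only: of_nat_mult mult_ac)
        moreover have "(of_nat ((j - k) * s) :: 'a) = of_nat (Suc 0)"
          using s by (simp only: of_nat_eq_iff_cong_CHAR)
        ultimately show False using v by simp
      qed
      show False
      proof (cases "k < j")
        case True show False using key[OF ab(1) ab(3) ab(2) True eq] .
      next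
        case False then have "j < k" using \<open>j \<noteq> k\<close> by simp
        then show False using key[OF ab(3) ab(1) ab(4) _ eq[symmetric]] by blast
      qed
    qed
    then show "a = b \<and> j = k" using eq by simp
  qed
  show "card W = ?p * card V"
    unfolding W_def using card_image[OF inj] by (simp add: card_cartesian_product)
qed

lemma ff_card_prime_power: "\<exists>n. CARD('a::{finite,field}) = CHAR('a) ^ n"
proof -
  have main: "\<And>V::'a set. card (UNIV - V) = m \<Longrightarrow> addclosed V \<Longrightarrow> card V = CHAR('a) ^ k \<Longrightarrow>
      \<exists>n. CARD('a) = CHAR('a) ^ n" for m k
  proof (induction m arbitrary: k rule: less_induct)
    case (less m V k)
    show ?case
    proof (cases "V = UNIV")
      case True then show ?thesis using less by auto
    next
      case False
      then obtain v where v: "v \<notin> V" by auto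
      define W where "W \<equiv> (\<lambda>(a,j). a + of_nat j * v) ` (V \<times> {..<CHAR('a)})"
      note ext = addclosed_extend[OF less(3) v, folded W_def]
      have "UNIV - W \<subset> UNIV - V" using ext(3,4) v by auto
      then have "card (UNIV - W) < m" using less(2)
        by (metis psubset_card_mono finite_Diff finite_class.finite_UNIV)
      moreover have "card W = CHAR('a) ^ Suc k" using ext(2) less(4) by simp
      ultimately show ?thesis using less(1) ext(1) by blast
    qed
  qed
  have "addclosed {0::'a}" by (simp add: addclosed_def)
  then show ?thesis using main[of "{0}" _ 0] by simp
qed

lemma field_degree_eq: "CARD('a::{finite,field}) = CHAR('a) ^ field_degree TYPE('a)"
proof -
  obtain n where n: "CARD('a) = CHAR('a) ^ n" using ff_card_prime_power by blast
  have "\<exists>!n. CARD('a) = CHAR('a) ^ n"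
    using n ff_char_gt1[where 'a='a] by (auto simp: power_inject_exp)
  then show ?thesis unfolding field_degree_def by (rule theI')
qed

lemma field_degree_pos: "field_degree TYPE('a::{finite,field}) > 0"
  using field_degree_eq[where 'a='a] ff_card_ge2[where 'a='a] by (cases "field_degree TYPE('a)") auto

lemma ff_card_odd_char:
  assumes "odd CARD('a::{finite,field})" shows "CHAR('a) \<noteq> 2"
  using assms field_degree_eq[where 'a='a] field_degree_pos[where 'a='a]
  by (metis dvd_power even_numeral gcd_nat.strict_trans2 field_degree_pos gr0I)

lemma two_nz:
  assumes "odd CARD('a::{finite,field})" shows "(2::'a) \<noteq> 0"
proof
  assume "(2::'a) = 0"
  then have "(of_nat 2::'a) = 0" by simp
  then have "CHAR('a) dvd 2" by (simp only: of_nat_eq_0_iff_char_dvd)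
  then have "CHAR('a) \<le> 2" by (rule dvd_imp_le) simp
  then show False using ff_card_odd_char[OF assms] ff_char_gt1[where 'a='a] by auto
qed

section \<open>Trace\<close>

lemma ftrace_add: "ftrace (x + y :: 'a::{finite,field}) = ftrace x + ftrace y"
  unfolding ftrace_def
  by (simp add: sum.distrib freshmans_dream'[OF ff_char_prime])

lemma ftrace_zero: "ftrace (0 :: 'a::{finite,field}) = 0"
  unfolding ftrace_def using ff_char_gt1[where 'a='a] by (simp add: power_0_left)

lemma ff_pow_q: "(x::'a::{finite,field}) ^ (CHAR('a) ^ field_degree TYPE('a)) = x"
  using ff_pow_card[of x] field_degree_eq[where 'a='a] by simp

lemma ftrace_pow_char: "ftrace (x::'a::{finite,field}) ^ CHAR('a) = ftrace x"
proof -
  let ?p = "CHAR('a)" and ?n = "field_degree TYPE('a)"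
  let ?f = "\<lambda>i. x ^ (?p ^ i)"
  have "ftrace x ^ ?p = (\<Sum>i<?n. (x ^ (?p ^ i)) ^ ?p)"
    unfolding ftrace_def by (rule freshmans_dream_sum[OF ff_char_prime refl])
  also have "\<dots> = (\<Sum>i<?n. ?f (Suc i))"
    by (simp add: power_mult[symmetric] mult.commute)
  also have "\<dots> = sum ?f {..<Suc ?n} - ?f 0"
    by (simp only: sum.lessThan_Suc_shift) simp
  also have "\<dots> = sum ?f {..<?n} + ?f ?n - ?f 0" by simp
  also have "\<dots> = sum ?f {..<?n}" using ff_pow_q[of x] by simp
  finally show ?thesis unfolding ftrace_def .
qed

lemma of_nat_pow_char: "(of_nat k :: 'a::{finite,field}) ^ CHAR('a) = of_nat k"
proof (induction k)
  case 0 then show ?case using ff_char_gt1[where 'a='a] by simp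
next
  case (Suc k)
  have "(of_nat (Suc k) :: 'a) ^ CHAR('a) = (of_nat k + 1) ^ CHAR('a)" by (simp add: add.commute)
  also have "\<dots> = of_nat k ^ CHAR('a) + 1 ^ CHAR('a)" by (rule freshmans_dream[OF ff_char_prime refl])
  finally show ?case using Suc by simp
qed

lemma of_nat_inj_char:
  "j < CHAR('a) \<Longrightarrow> k < CHAR('a) \<Longrightarrow> (of_nat j :: 'a::{finite,field}) = of_nat k \<Longrightarrow> j = k"
  by (simp only: of_nat_eq_iff_cong_CHAR) (rule cong_less_modulus_unique_nat)

lemma prime_field_elem:
  assumes "(y::'a::{finite,field}) ^ CHAR('a) = y"
  shows "\<exists>k<CHAR('a). of_nat k = y"
proof -
  let ?p = "CHAR('a)"
  define P :: "'a poly" where "P = monom 1 ?p - [:0, 1:]"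
  have p1: "?p > 1" by (rule ff_char_gt1)
  have cP: "coeff P ?p = 1" using p1 by (simp add: P_def coeff_pCons split: nat.splits)
  then have P0: "P \<noteq> 0" by auto
  have dP: "degree P \<le> ?p"
    by (rule degree_le) (use p1 in \<open>auto simp: P_def coeff_pCons split: nat.splits\<close>)
  have poly: "poly P z = z ^ ?p - z" for z by (simp add: P_def poly_monom)
  let ?S = "{z. poly P z = 0}"
  have sub: "of_nat ` {..<?p} \<subseteq> ?S" by (auto simp: poly of_nat_pow_char)
  have inj: "inj_on (of_nat :: nat \<Rightarrow> 'a) {..<?p}"
    by (rule inj_onI) (auto intro: of_nat_inj_char)
  have "card ?S \<le> ?p" using card_poly_roots_bound[OF P0] dP by simp
  moreover have "card (of_nat ` {..<?p} :: 'a set) = ?p" using card_image[OF inj] by simp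
  moreover have "card (of_nat ` {..<?p} :: 'a set) \<le> card ?S" using sub by (intro card_mono) auto
  ultimately have "of_nat ` {..<?p} = ?S"
    using sub by (intro card_subset_eq) auto
  moreover have "y \<in> ?S" using assms by (simp add: poly)
  ultimately show ?thesis by force
qed

definition ktr :: "'a::{finite,field} \<Rightarrow> nat" where
  "ktr x = (THE k. k < CHAR('a) \<and> of_nat k = ftrace x)"

lemma ktr: "ktr (x::'a::{finite,field}) < CHAR('a) \<and> of_nat (ktr x) = ftrace x"
proof -
  have "\<exists>!k. k < CHAR('a) \<and> (of_nat k :: 'a) = ftrace x"
    using prime_field_elem[OF ftrace_pow_char[of x]] of_nat_inj_char by metis
  then show ?thesis unfolding ktr_def by (rule theI')
qed

lemma ktr_zero: "ktr (0::'a::{finite,field}) = 0"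
  using ktr[of "0::'a"] ff_char_gt1[where 'a='a] of_nat_inj_char[of "ktr (0::'a)" 0, where 'a='a]
  by (simp add: ftrace_zero)

lemma ftrace_nonzero: "\<exists>x::'a::{finite,field}. ftrace x \<noteq> 0"
proof (rule ccontr)
  assume "\<not> ?thesis"
  then have all0: "\<forall>x::'a. ftrace x = 0" by simp
  let ?p = "CHAR('a)" and ?n = "field_degree TYPE('a)"
  define P :: "'a poly" where "P = (\<Sum>i<?n. monom 1 (?p ^ i))"
  have n0: "?n > 0" by (rule field_degree_pos)
  have p1: "?p > 1" by (rule ff_char_gt1)
  have coeffP: "coeff P j = (\<Sum>i<?n. if ?p ^ i = j then 1 else 0)" for j
    by (simp add: P_def coeff_sum coeff_monom)
  have "coeff P (?p ^ (?n - 1)) = (\<Sum>i\<in>{?n - 1}. 1)"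
    unfolding coeffP using n0 p1
    by (intro sum.mono_neutral_cong_right) (auto simp: power_inject_exp)
  then have "coeff P (?p ^ (?n - 1)) = 1" by simp
  then have P0: "P \<noteq> 0" by auto
  have dP: "degree P \<le> ?p ^ (?n - 1)"
  proof (rule degree_le, intro allI impI)
    fix j assume j: "?p ^ (?n - 1) < j"
    have "?p ^ i \<noteq> j" if "i < ?n" for i
    proof -
      have "?p ^ i \<le> ?p ^ (?n - 1)" using that p1 by (intro power_increasing) auto
      then show ?thesis using j by simp
    qed
    then show "coeff P j = 0" unfolding coeffP by simp
  qed
  have "poly P x = ftrace x" for x
    by (simp add: P_def poly_sum poly_monom ftrace_def)
  then have "{x. poly P x = 0} = UNIV" using all0 by auto
  then have "CARD('a) \<le> ?p ^ (?n - 1)" using card_poly_roots_bound[OF P0] dP by simp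
  moreover have "?p ^ (?n - 1) < ?p ^ ?n" using p1 n0 by (intro power_strict_increasing) auto
  ultimately show False using field_degree_eq[where 'a='a] by simp
qed

section \<open>Additive character\<close>

context
  fixes \<zeta> :: complex
  assumes z1: "\<zeta> ^ CHAR('a::{finite,field}) = 1"
    and z2: "\<forall>k. 0 < k \<and> k < CHAR('a) \<longrightarrow> \<zeta> ^ k \<noteq> 1"
begin

lemma zeta_mod: "\<zeta> ^ (k mod CHAR('a)) = \<zeta> ^ k"
proof -
  have "\<zeta> ^ k = \<zeta> ^ (CHAR('a) * (k div CHAR('a)) + k mod CHAR('a))" by (metis mult_div_mod_eq)
  also have "\<dots> = \<zeta> ^ (k mod CHAR('a))" by (simp only: power_add power_mult z1 power_one mult_1)
  finally show ?thesis by simp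
qed

lemma addchar_add: "addchar \<zeta> (x + y :: 'a) = addchar \<zeta> x * addchar \<zeta> y"
proof -
  have "(of_nat (ktr (x + y)) :: 'a) = of_nat (ktr x + ktr y)"
    using ktr[of x] ktr[of y] ktr[of "x+y"] by (simp add: ftrace_add)
  then have "[ktr (x + y) = ktr x + ktr y] (mod CHAR('a))" by (simp only: of_nat_eq_iff_cong_CHAR)
  then have "(ktr x + ktr y) mod CHAR('a) = ktr (x + y)"
    using ktr[of "x+y"] by (simp add: cong_def)
  then have "\<zeta> ^ ktr (x + y) = \<zeta> ^ (ktr x + ktr y)" using zeta_mod[of "ktr x + ktr y"] by simp
  then show ?thesis unfolding addchar_def ktr_def[symmetric] by (simp add: power_add)
qed

lemma addchar_zero: "addchar \<zeta> (0::'a) = 1"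
  unfolding addchar_def ktr_def[symmetric] by (simp add: ktr_zero)

lemma addchar_nontriv: "\<exists>x::'a. addchar \<zeta> x \<noteq> 1"
proof -
  obtain x :: 'a where x: "ftrace x \<noteq> 0" using ftrace_nonzero by blast
  have "ktr x \<noteq> 0"
  proof
    assume "ktr x = 0"
    then have "ftrace x = 0" using ktr[of x] by simp
    with x show False by simp
  qed
  then have "\<zeta> ^ ktr x \<noteq> 1" using z2 ktr[of x] by auto
  then show ?thesis unfolding addchar_def ktr_def[symmetric] by blast
qed

lemma addchar_sum_UNIV: "(\<Sum>x\<in>UNIV. addchar \<zeta> (x::'a)) = 0"
proof -
  obtain x0 :: 'a where x0: "addchar \<zeta> x0 \<noteq> 1" using addchar_nontriv by blast
  have "(\<Sum>x\<in>UNIV. addchar \<zeta> (x::'a)) = (\<Sum>x\<in>UNIV. addchar \<zeta> (x + x0))"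
    by (rule sum.reindex_bij_witness[of _ "\<lambda>x. x + x0" "\<lambda>x. x - x0"]) auto
  also have "\<dots> = addchar \<zeta> x0 * (\<Sum>x\<in>UNIV. addchar \<zeta> (x::'a))"
    by (simp add: addchar_add sum_distrib_left mult.commute)
  finally show ?thesis using x0 by (metis mult_cancel_right2 mult.commute)
qed

lemma addchar_sum_nz: "(\<Sum>x\<in>UNIV-{0}. addchar \<zeta> (x::'a)) = -1"
proof -
  have "(\<Sum>x\<in>UNIV. addchar \<zeta> (x::'a)) = addchar \<zeta> (0::'a) + (\<Sum>x\<in>UNIV-{0}. addchar \<zeta> (x::'a))"
    using sum.remove[of "UNIV::'a set" 0 "addchar \<zeta>"] by simp
  then show ?thesis using addchar_sum_UNIV addchar_zero by (simp add: eq_neg_iff_add_eq_0 add.commute)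
qed

end

section \<open>Cyclicity\<close>

lemma ring_of_type_pow: "x [^]\<^bsub>(ring_of_type_algebra :: 'a::field ring)\<^esub> (i::nat) = x ^ i"
  by (induction i) (simp_all add: ring_of_type_algebra_def)

lemma ff_generator: "\<exists>g::'a::{finite,field}. g \<noteq> 0 \<and> (\<forall>x. x \<noteq> 0 \<longrightarrow> (\<exists>i. x = g ^ i))"
proof -
  let ?R = "ring_of_type_algebra :: 'a ring"
  have F: "field ?R" by (rule field_from_type_algebra)
  have "finite (carrier ?R)" by simp
  from field.finite_field_mult_group_has_gen[OF F this]
  have "\<exists>a. a \<in> carrier (Multiplicative_Group.mult_of ?R) \<and>
     carrier (Multiplicative_Group.mult_of ?R) = {a [^]\<^bsub>?R\<^esub> (i::nat) |i. i \<in> UNIV}"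
    by (simp only: Bex_def)
  then obtain a where "a \<in> carrier (Multiplicative_Group.mult_of ?R) \<and>
     carrier (Multiplicative_Group.mult_of ?R) = {a [^]\<^bsub>?R\<^esub> (i::nat) |i. i \<in> UNIV}" ..
  note agen = this
  have a: "a \<in> carrier (Multiplicative_Group.mult_of ?R)" using agen by (rule conjunct1)
  have gen: "carrier (Multiplicative_Group.mult_of ?R) = {a [^]\<^bsub>?R\<^esub> (i::nat) |i. i \<in> UNIV}"
    using agen by (rule conjunct2)
  have car: "carrier (Multiplicative_Group.mult_of ?R) = UNIV - {0}"
    by (simp add: Multiplicative_Group.carrier_mult_of ring_of_type_algebra_def)
  have gen': "UNIV - {0} = {a ^ i |i. i \<in> UNIV}" using gen[unfolded car] by (simp add: ring_of_type_pow)
  show ?thesis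
  proof (rule exI[of _ a], intro conjI allI impI)
    show "a \<noteq> 0" using a[unfolded car] by simp
    fix x :: 'a assume "x \<noteq> 0"
    then have "x \<in> UNIV - {0}" by simp
    then show "\<exists>i. x = a ^ i" unfolding gen' by blast
  qed
qed

context
  fixes g :: "'a::{finite,field}"
  assumes g: "g \<noteq> 0" "\<And>x. x \<noteq> 0 \<Longrightarrow> \<exists>i. x = g ^ i"
begin

lemma g_pow_N: "g ^ (CARD('a) - 1) = 1"
  using ff_pow_card1 g(1) by blast

lemma g_pow_mod: "i > 0 \<Longrightarrow> g ^ i = 1 \<Longrightarrow> g ^ k = g ^ (k mod i)"
proof -
  assume "i > 0" "g ^ i = 1"
  have "g ^ k = g ^ (i * (k div i) + k mod i)" by (metis mult_div_mod_eq)
  also have "\<dots> = g ^ (k mod i)" by (simp only: power_add power_mult \<open>g ^ i = 1\<close> power_one mult_1)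
  finally show ?thesis .
qed

lemma g_order: "0 < i \<Longrightarrow> g ^ i = 1 \<Longrightarrow> CARD('a) - 1 \<le> i"
proof -
  assume i: "0 < i" "g ^ i = 1"
  have "UNIV - {0} \<subseteq> (\<lambda>j. g ^ j) ` {..<i}"
  proof
    fix x :: 'a assume "x \<in> UNIV - {0}"
    then obtain k where "x = g ^ k" using g(2) by blast
    then have "x = g ^ (k mod i)" using g_pow_mod[OF i] by simp
    moreover have "k mod i < i" using i by simp
    ultimately show "x \<in> (\<lambda>j. g ^ j) ` {..<i}" by blast
  qed
  then have "card (UNIV - {0::'a}) \<le> card ((\<lambda>j. g ^ j) ` {..<i})" by (intro card_mono) auto
  also have "\<dots> \<le> i" using card_image_le[of "{..<i}" "\<lambda>j. g ^ j"] by simp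
  finally show ?thesis by (simp add: card_Diff_singleton)
qed

lemma g_pow_eq: "g ^ a = g ^ b \<Longrightarrow> a mod (CARD('a) - 1) = b mod (CARD('a) - 1)"
proof -
  let ?N = "CARD('a) - 1"
  have N0: "?N > 0" using ff_card_ge2[where 'a='a] by simp
  have key: "g ^ a' \<noteq> g ^ b'" if "a' < b'" "b' < ?N" for a' b'
  proof
    assume eq: "g ^ a' = g ^ b'"
    have "g ^ b' = g ^ a' * g ^ (b' - a')" using that by (simp add: power_add[symmetric])
    then have "g ^ (b' - a') = 1" using eq g(1) by simp
    then have "?N \<le> b' - a'" using that by (intro g_order) auto
    then show False using that by simp
  qed
  assume "g ^ a = g ^ b"
  then have eq: "g ^ (a mod ?N) = g ^ (b mod ?N)" using g_pow_mod[OF N0 g_pow_N] by metis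
  show ?thesis
  proof (rule ccontr)
    assume ne: "a mod ?N \<noteq> b mod ?N"
    show False
    proof (cases "a mod ?N < b mod ?N")
      case True then show False using key[OF True] eq N0 by simp
    next
      case False then have "b mod ?N < a mod ?N" using ne by simp
      then show False using key eq N0 by (metis mod_less_divisor)
    qed
  qed
qed

end

lemma root_unity_prim:
  fixes N :: nat assumes N: "N > 0"
  defines "z \<equiv> cis (2 * pi / N)"
  shows "z ^ k = 1 \<longleftrightarrow> N dvd k"
proof
  assume "N dvd k"
  then obtain j where "k = N * j" by blast
  then have "z ^ k = cis (2 * pi * of_int (int j))" using N by (simp add: z_def DeMoivre field_simps)
  then show "z ^ k = 1" by (simp only: cis_multiple_2pi Ints_of_int)
next
  assume zk: "z ^ k = 1"
  have "z ^ N = 1" using N by (simp add: z_def DeMoivre)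
  have "z ^ k = z ^ (N * (k div N) + k mod N)" by (metis mult_div_mod_eq)
  also have "\<dots> = z ^ (k mod N)" by (simp only: power_add power_mult \<open>z ^ N = 1\<close> power_one mult_1)
  finally have "z ^ (k mod N) = 1" using zk by simp
  define \<theta> where "\<theta> = real (k mod N) * (2 * pi / N)"
  have "cis \<theta> = 1" using \<open>z ^ (k mod N) = 1\<close> unfolding z_def DeMoivre \<theta>_def .
  have "cos \<theta> = Re (cis \<theta>)" by simp
  also have "\<dots> = 1" using \<open>cis \<theta> = 1\<close> by simp
  finally have "\<exists>n::int. \<theta> = real_of_int n * 2 * pi" by (simp only: cos_one_2pi_int)
  then obtain n :: int where n: "real (k mod N) * (2 * pi / N) = real_of_int n * 2 * pi"
    unfolding \<theta>_def by blast
  then have "real (k mod N) = real_of_int n * real N" using N by (simp add: field_simps)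
  then have "int (k mod N) = n * int N" by (metis of_int_eq_iff of_int_mult of_int_of_nat_eq of_nat_mult)
  moreover have "k mod N < N" using N by simp
  ultimately have "k mod N = 0"
  proof -
    assume eqn: "int (k mod N) = n * int N" and lt: "k mod N < N"
    have "n = 0"
    proof (rule ccontr)
      assume "n \<noteq> 0"
      then consider "n \<ge> 1" | "n \<le> -1" by linarith
      then show False
      proof cases
        case 1
        then have "1 * int N \<le> n * int N" by (intro mult_right_mono) auto
        moreover have "int (k mod N) < int N" using lt by simp
        ultimately show False using eqn by linarith
      next
        case 2
        then have "n * int N \<le> (-1) * int N" by (intro mult_right_mono) auto
        then show False using eqn N by simp
      qed
    qed
    then show ?thesis using eqn by simp
  qed
  then show "N dvd k" by auto
qed

section \<open>Multiplicative characters\<close>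

lemma mc_xinv: "mult_char \<chi> \<Longrightarrow> (x::'a::{finite,field}) \<noteq> 0 \<Longrightarrow> \<chi> x * \<chi> (inverse x) = 1"
proof -
  assume a: "mult_char \<chi>" "x \<noteq> 0"
  have "inverse x \<noteq> 0" using a(2) by simp
  then have m: "\<chi> (x * inverse x) = \<chi> x * \<chi> (inverse x)" using a unfolding mult_char_def by blast
  have o: "\<chi> 1 = 1" using a unfolding mult_char_def by blast
  have "x * inverse x = 1" using a(2) by simp
  then show ?thesis using m o by simp
qed

lemma mc_nz: "mult_char \<chi> \<Longrightarrow> (x::'a::{finite,field}) \<noteq> 0 \<Longrightarrow> \<chi> x \<noteq> 0"
  using mc_xinv by fastforce

lemma mc_inv: "mult_char \<chi> \<Longrightarrow> (x::'a::{finite,field}) \<noteq> 0 \<Longrightarrow> \<chi> (inverse x) = inverse (\<chi> x)"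
  using mc_xinv by (metis inverse_unique)

lemma mc_pow: "mult_char \<chi> \<Longrightarrow> (x::'a::{finite,field}) \<noteq> 0 \<Longrightarrow> \<chi> (x ^ k) = \<chi> x ^ k"
  by (induction k) (auto simp: mult_char_def)

lemma mc_N: "mult_char \<chi> \<Longrightarrow> (x::'a::{finite,field}) \<noteq> 0 \<Longrightarrow> \<chi> x ^ (CARD('a) - 1) = 1"
  using mc_pow[of \<chi> x "CARD('a) - 1"] ff_pow_card1[of x] by (simp add: mult_char_def)

lemma mc_mult: "mult_char \<chi>1 \<Longrightarrow> mult_char \<chi>2 \<Longrightarrow> mult_char (\<lambda>x::'a::{finite,field}. \<chi>1 x * \<chi>2 x)"
  unfolding mult_char_def by (simp add: mult_ac)

lemma mc_power: "mult_char \<chi> \<Longrightarrow> mult_char (\<lambda>x::'a::{finite,field}. \<chi> x ^ m)"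
  unfolding mult_char_def by (simp add: power_mult_distrib)

lemma mc_invpower: "mult_char \<chi> \<Longrightarrow> mult_char (\<lambda>x::'a::{finite,field}. inverse (\<chi> x) ^ m)"
  unfolding mult_char_def by (simp add: power_mult_distrib)

lemma mc_sum_nontriv:
  assumes "mult_char \<chi>" "(a::'a::{finite,field}) \<noteq> 0" "\<chi> a \<noteq> 1"
  shows "(\<Sum>x\<in>UNIV-{0}. \<chi> x) = 0"
proof -
  have "(\<Sum>x\<in>UNIV-{0}. \<chi> x) = (\<Sum>x\<in>UNIV-{0}. \<chi> (a * x))"
    by (rule sum.reindex_bij_witness[of _ "\<lambda>x. a * x" "\<lambda>x. x / a"]) (use assms(2) in auto)
  also have "\<dots> = \<chi> a * (\<Sum>x\<in>UNIV-{0}. \<chi> x)"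
    using assms(1,2) by (simp add: sum_distrib_left mult_char_def)
  finally show ?thesis using assms(3) by (metis mult_cancel_right2 mult.commute)
qed

lemma injective_char: "\<exists>\<chi>. mult_char \<chi> \<and> (\<forall>x::'a::{finite,field}. x \<noteq> 0 \<longrightarrow> \<chi> x = 1 \<longrightarrow> x = 1)"
proof -
  obtain g :: 'a where g: "g \<noteq> 0" "\<And>x. x \<noteq> 0 \<Longrightarrow> \<exists>i. x = g ^ i"
    using ff_generator by blast
  let ?N = "CARD('a) - 1"
  have N0: "?N > 0" using ff_card_ge2[where 'a='a] by simp
  define z where "z = cis (2 * pi / ?N)"
  have zdvd: "z ^ k = 1 \<longleftrightarrow> ?N dvd k" for k unfolding z_def by (rule root_unity_prim[OF N0])
  have zmod: "z ^ k = z ^ (k mod ?N)" for k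
  proof -
    have zN: "z ^ ?N = 1" using zdvd by simp
    have "z ^ k = z ^ (?N * (k div ?N) + k mod ?N)" by (metis mult_div_mod_eq)
    also have "\<dots> = z ^ (k mod ?N)" by (simp only: power_add power_mult zN power_one mult_1)
    finally show ?thesis .
  qed
  define dl where "dl x = (SOME i. x = g ^ i)" for x
  have dl: "x \<noteq> 0 \<Longrightarrow> g ^ dl x = x" for x unfolding dl_def by (metis (mono_tags) someI_ex g(2))
  define \<chi> where "\<chi> x = z ^ dl x" for x
  have "mult_char \<chi>"
    unfolding mult_char_def
  proof (intro conjI allI impI)
    have "g ^ dl 1 = g ^ 0" using dl[of 1] by simp
    then have "dl 1 mod ?N = 0 mod ?N" using g_pow_eq[OF g] by blast
    then show "\<chi> 1 = 1" unfolding \<chi>_def using zmod[of "dl 1"] by simp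
  next
    fix x y :: 'a assume xy: "x \<noteq> 0" "y \<noteq> 0"
    have "g ^ dl (x * y) = g ^ (dl x + dl y)" using dl[of x] dl[of y] dl[of "x*y"] xy
      by (simp add: power_add)
    then have "dl (x * y) mod ?N = (dl x + dl y) mod ?N" using g_pow_eq[OF g] by blast
    then show "\<chi> (x * y) = \<chi> x * \<chi> y"
      unfolding \<chi>_def by (metis zmod power_add)
  qed
  moreover have "x = 1" if "x \<noteq> 0" "\<chi> x = 1" for x
  proof -
    have "?N dvd dl x" using that zdvd unfolding \<chi>_def by simp
    then have "dl x mod ?N = 0 mod ?N" by simp
    then have "g ^ dl x = g ^ 0" using g_pow_mod[OF g N0 g_pow_N[OF g]] by metis
    then show ?thesis using dl[OF that(1)] by simp
  qed
  ultimately show ?thesis by blast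
qed

lemma omega_one:
  assumes "char_generator \<omega>" "(x::'a::{finite,field}) \<noteq> 0" "\<omega> x = 1"
  shows "x = 1"
proof -
  obtain \<chi> :: "'a \<Rightarrow> complex" where \<chi>: "mult_char \<chi>" "\<And>x. x \<noteq> 0 \<Longrightarrow> \<chi> x = 1 \<Longrightarrow> x = 1"
    using injective_char by blast
  then obtain m where "\<forall>x. x \<noteq> 0 \<longrightarrow> \<chi> x = \<omega> x ^ m" using assms(1) unfolding char_generator_def by blast
  then have "\<chi> x = 1" using assms by simp
  then show ?thesis using \<chi>(2) assms(2) by blast
qed

lemma omega_orth:
  assumes "char_generator \<omega>" "(u::'a::{finite,field}) \<noteq> 0"
  shows "(\<Sum>m<CARD('a) - 1. \<omega> u ^ m) = (if u = 1 then of_nat (CARD('a) - 1) else 0)"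
proof -
  have mc: "mult_char \<omega>" using assms(1) by (simp add: char_generator_def)
  show ?thesis
  proof (cases "u = 1")
    case True then show ?thesis using mc by (simp add: mult_char_def)
  next
    case False
    then have "\<omega> u \<noteq> 1" using omega_one[OF assms] by blast
    then show ?thesis using False mc_N[OF mc assms(2)] by (simp add: sum_gp_strict)
  qed
qed

lemma omega_nontriv:
  assumes "char_generator \<omega>" "0 < m" "m < CARD('a::{finite,field}) - 1"
  shows "\<exists>a::'a. a \<noteq> 0 \<and> \<omega> a ^ m \<noteq> 1"
proof -
  obtain g :: 'a where g: "g \<noteq> 0" "\<And>x. x \<noteq> 0 \<Longrightarrow> \<exists>i. x = g ^ i"
    using ff_generator by blast
  have mc: "mult_char \<omega>" using assms(1) by (simp add: char_generator_def)
  have "g ^ m \<noteq> 1" using g_order[OF g assms(2)] assms(3) by auto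
  then have "\<omega> (g ^ m) \<noteq> 1" using omega_one[OF assms(1)] g(1) by auto
  then show ?thesis using mc_pow[OF mc g(1)] g(1) by auto
qed

section \<open>The quadratic character\<close>

lemma phi_pm: "quad_char \<phi> \<Longrightarrow> (x::'a::{finite,field}) \<noteq> 0 \<Longrightarrow> \<phi> x = 1 \<or> \<phi> x = -1"
  unfolding quad_char_def by (metis power2_eq_1_iff)

lemma phi_sq: "quad_char \<phi> \<Longrightarrow> (x::'a::{finite,field}) \<noteq> 0 \<Longrightarrow> \<phi> (x ^ 2) = 1"
  unfolding quad_char_def using mc_pow by metis

lemma phi_one_sq:
  assumes "quad_char \<phi>" "(x::'a::{finite,field}) \<noteq> 0" "\<phi> x = 1"
  shows "\<exists>s. s ^ 2 = x"
proof -
  obtain g :: 'a where g: "g \<noteq> 0" "\<And>x. x \<noteq> 0 \<Longrightarrow> \<exists>i. x = g ^ i"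
    using ff_generator by blast
  have mc: "mult_char \<phi>" using assms(1) by (simp add: quad_char_def)
  have "\<phi> g \<noteq> 1"
  proof
    assume "\<phi> g = 1"
    then have "\<phi> y = 1" if "y \<noteq> 0" for y using g(2)[OF that] mc_pow[OF mc g(1)] by auto
    then show False using assms(1) unfolding quad_char_def by blast
  qed
  then have pg: "\<phi> g = -1" using phi_pm[OF assms(1) g(1)] by simp
  obtain i where i: "x = g ^ i" using g(2)[OF assms(2)] by blast
  have "(-1::complex) ^ i = 1" using assms(3) mc_pow[OF mc g(1), of i] pg i by simp
  then have "even i" by (cases "even i") auto
  then obtain j where "i = 2 * j" by blast
  then have "(g ^ j) ^ 2 = x" using i by (simp add: power_mult[symmetric] mult.commute)
  then show ?thesis by blast
qed

lemma card_sqrt: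
  assumes "quad_char \<phi>" "odd CARD('a::{finite,field})" "(D::'a) \<noteq> 0"
  shows "of_nat (card {z. z ^ 2 = D}) = 1 + \<phi> D"
proof (cases "\<phi> D = 1")
  case True
  then obtain s where s: "s ^ 2 = D" using phi_one_sq[OF assms(1,3)] by blast
  then have s0: "s \<noteq> 0" using assms(3) by auto
  have "s \<noteq> - s"
  proof
    assume "s = - s"
    then have "s + s = 0" by (metis add.right_inverse)
    then have "2 * s = 0" by (simp only: mult_2)
    then show False using s0 two_nz[OF assms(2)] by simp
  qed
  moreover have "{z. z ^ 2 = D} = {s, -s}" using s by (auto simp: power2_eq_iff)
  ultimately show ?thesis using True by simp
next
  case False
  then have m1: "\<phi> D = -1" using phi_pm[OF assms(1,3)] by simp
  have "{z. z ^ 2 = D} = {}"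
  proof (rule ccontr)
    assume "{z. z ^ 2 = D} \<noteq> {}"
    then obtain z where z: "z ^ 2 = D" by blast
    then have "z \<noteq> 0" using assms(3) by auto
    then have "\<phi> D = 1" using phi_sq[OF assms(1)] z by blast
    then show False using m1 by simp
  qed
  then show ?thesis using m1 by simp
qed

section \<open>Gauss sums\<close>

lemma mc_neg:
  assumes "mult_char \<chi>" "(x::'a::{finite,field}) \<noteq> 0"
  shows "\<chi> (-x) = \<chi> (-1) * \<chi> x"
proof -
  have h: "\<forall>a b. a \<noteq> 0 \<longrightarrow> b \<noteq> 0 \<longrightarrow> \<chi> (a * b) = \<chi> a * \<chi> b"
    using assms(1) unfolding mult_char_def by blast
  have "(-1::'a) \<noteq> 0" by simp
  then have "\<chi> ((-1) * x) = \<chi> (-1) * \<chi> x" using h assms(2) by blast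
  then show ?thesis by simp
qed

context
  fixes \<zeta> :: complex
  assumes z1: "\<zeta> ^ CHAR('a::{finite,field}) = 1"
    and z2: "\<forall>k. 0 < k \<and> k < CHAR('a) \<longrightarrow> \<zeta> ^ k \<noteq> 1"
begin

lemma gauss_core:
  fixes \<chi>1 \<chi>2 :: "'a \<Rightarrow> complex"
  assumes m1: "mult_char \<chi>1" and m2: "mult_char \<chi>2"
  shows "gauss_sum \<zeta> \<chi>1 * gauss_sum \<zeta> \<chi>2 =
    (\<Sum>x\<in>UNIV-{0}. \<chi>1 x * \<chi>2 (-x)) +
    (\<Sum>a\<in>UNIV-{0,1}. \<chi>1 a * \<chi>2 (1-a)) * (\<Sum>s\<in>UNIV-{0}. \<chi>1 s * \<chi>2 s * addchar \<zeta> s)"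
proof -
  let ?S = "UNIV - {0::'a}"
  let ?\<psi> = "addchar \<zeta> :: 'a \<Rightarrow> complex"
  let ?J = "\<Sum>a\<in>UNIV-{0,1}. \<chi>1 a * \<chi>2 (1-a)"
  define F where "F x s = \<chi>1 x * \<chi>2 (s - x) * ?\<psi> s" for x s
  have "gauss_sum \<zeta> \<chi>1 * gauss_sum \<zeta> \<chi>2 = (\<Sum>x\<in>?S. \<Sum>y\<in>?S. \<chi>1 x * \<chi>2 y * ?\<psi> (x + y))"
    unfolding gauss_sum_def sum_product by (simp add: addchar_add[OF z1 z2] mult_ac)
  also have "\<dots> = (\<Sum>x\<in>?S. \<Sum>s\<in>{s\<in>UNIV. s \<noteq> x}. F x s)"
  proof (rule sum.cong[OF refl])
    fix x assume "x \<in> ?S"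
    show "(\<Sum>y\<in>?S. \<chi>1 x * \<chi>2 y * ?\<psi> (x + y)) = (\<Sum>s\<in>{s\<in>UNIV. s \<noteq> x}. F x s)"
      by (rule sum.reindex_bij_witness[of _ "\<lambda>s. s - x" "\<lambda>y. x + y"]) (auto simp: F_def)
  qed
  also have "\<dots> = (\<Sum>s\<in>UNIV. \<Sum>x\<in>{x\<in>?S. s \<noteq> x}. F x s)"
    by (rule sum.swap_restrict) auto
  also have "\<dots> = (\<Sum>x\<in>{x\<in>?S. 0 \<noteq> x}. F x 0) + (\<Sum>s\<in>?S. \<Sum>x\<in>{x\<in>?S. s \<noteq> x}. F x s)"
    using sum.remove[of "UNIV::'a set" 0 "\<lambda>s. \<Sum>x\<in>{x\<in>?S. s \<noteq> x}. F x s"] by simp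
  also have "(\<Sum>x\<in>{x\<in>?S. 0 \<noteq> x}. F x 0) = (\<Sum>x\<in>?S. \<chi>1 x * \<chi>2 (-x))"
    by (rule sum.cong) (auto simp: F_def addchar_zero[OF z1 z2])
  also have "(\<Sum>s\<in>?S. \<Sum>x\<in>{x\<in>?S. s \<noteq> x}. F x s) = (\<Sum>s\<in>?S. ?J * (\<chi>1 s * \<chi>2 s * ?\<psi> s))"
  proof (rule sum.cong[OF refl])
    fix s assume s: "s \<in> ?S"
    then have s0: "s \<noteq> 0" by simp
    have "(\<Sum>x\<in>{x\<in>?S. s \<noteq> x}. F x s) = (\<Sum>a\<in>UNIV-{0,1}. F (s * a) s)"
      by (rule sum.reindex_bij_witness[of _ "\<lambda>a. s * a" "\<lambda>x. x / s"]) (use s0 in auto)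
    also have "\<dots> = (\<Sum>a\<in>UNIV-{0,1}. (\<chi>1 a * \<chi>2 (1-a)) * (\<chi>1 s * \<chi>2 s * ?\<psi> s))"
    proof (rule sum.cong[OF refl])
      fix a assume a: "a \<in> UNIV - {0, 1::'a}"
      have "s - s * a = s * (1 - a)" by (simp add: algebra_simps)
      moreover have "1 - a \<noteq> 0" using a by simp
      ultimately have "\<chi>2 (s - s * a) = \<chi>2 s * \<chi>2 (1 - a)" using m2 s0 by (simp add: mult_char_def)
      moreover have "\<chi>1 (s * a) = \<chi>1 s * \<chi>1 a" using m1 s0 a by (simp add: mult_char_def)
      ultimately show "F (s * a) s = (\<chi>1 a * \<chi>2 (1-a)) * (\<chi>1 s * \<chi>2 s * ?\<psi> s)"
        by (simp add: F_def mult_ac)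
    qed
    also have "\<dots> = ?J * (\<chi>1 s * \<chi>2 s * ?\<psi> s)" by (simp add: sum_distrib_right)
    finally show "(\<Sum>x\<in>{x\<in>?S. s \<noteq> x}. F x s) = ?J * (\<chi>1 s * \<chi>2 s * ?\<psi> s)" .
  qed
  also have "\<dots> = ?J * (\<Sum>s\<in>?S. \<chi>1 s * \<chi>2 s * ?\<psi> s)" by (simp add: sum_distrib_left)
  finally show ?thesis .
qed

lemma gauss_jacobi:
  fixes \<chi>1 \<chi>2 :: "'a \<Rightarrow> complex"
  assumes m1: "mult_char \<chi>1" and m2: "mult_char \<chi>2" and b: "b \<noteq> 0" "\<chi>1 b * \<chi>2 b \<noteq> 1"
  shows "gauss_sum \<zeta> \<chi>1 * gauss_sum \<zeta> \<chi>2 =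
    (\<Sum>a\<in>UNIV-{0,1}. \<chi>1 a * \<chi>2 (1-a)) * gauss_sum \<zeta> (\<lambda>x. \<chi>1 x * \<chi>2 x)"
proof -
  have "(\<Sum>x\<in>UNIV-{0}. \<chi>1 x * \<chi>2 (-x)) = (\<Sum>x\<in>UNIV-{0}. \<chi>2 (-1) * (\<chi>1 x * \<chi>2 x))"
  proof (rule sum.cong[OF refl])
    fix x :: 'a assume "x \<in> UNIV - {0}"
    then have "x \<noteq> 0" by simp
    then have "\<chi>2 (-x) = \<chi>2 (-1) * \<chi>2 x" by (rule mc_neg[OF m2])
    then show "\<chi>1 x * \<chi>2 (-x) = \<chi>2 (-1) * (\<chi>1 x * \<chi>2 x)" by (simp add: mult_ac)
  qed
  also have "\<dots> = \<chi>2 (-1) * (\<Sum>x\<in>UNIV-{0}. \<chi>1 x * \<chi>2 x)" by (simp add: sum_distrib_left)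
  also have "(\<Sum>x\<in>UNIV-{0}. \<chi>1 x * \<chi>2 x) = 0"
    by (rule mc_sum_nontriv[OF mc_mult[OF m1 m2] b])
  finally have "(\<Sum>x\<in>UNIV-{0}. \<chi>1 x * \<chi>2 (-x)) = 0" by simp
  then show ?thesis using gauss_core[OF m1 m2] by (simp add: gauss_sum_def)
qed

lemma phi_inv_eq:
  assumes "quad_char \<phi>" "(y::'a) \<noteq> 0" shows "\<phi> (inverse y) = \<phi> y"
proof -
  have mc: "mult_char \<phi>" using assms(1) by (simp add: quad_char_def)
  show ?thesis using mc_inv[OF mc assms(2)] phi_pm[OF assms] by auto
qed

lemma gauss_phi_sq:
  assumes q: "quad_char (\<phi> :: 'a \<Rightarrow> complex)"
  shows "gauss_sum \<zeta> \<phi> * gauss_sum \<zeta> \<phi> = \<phi> (-1) * of_nat CARD('a)"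
proof -
  have mc: "mult_char \<phi>" using q by (simp add: quad_char_def)
  have sq1: "\<phi> x * \<phi> x = 1" if "x \<noteq> 0" for x :: 'a
    using q that unfolding quad_char_def by (simp add: power2_eq_square)
  have A: "(\<Sum>x\<in>UNIV-{0}. \<phi> x * \<phi> (-x)) = \<phi> (-1) * of_nat (CARD('a) - 1)"
  proof -
    have "(\<Sum>x\<in>UNIV-{0}. \<phi> x * \<phi> (-x)) = (\<Sum>x\<in>UNIV-{0::'a}. \<phi> (-1))"
    proof (rule sum.cong[OF refl])
      fix x :: 'a assume "x \<in> UNIV - {0}"
      then have x: "x \<noteq> 0" by simp
      then have "\<phi> (-x) = \<phi> (-1) * \<phi> x" by (rule mc_neg[OF mc])
      then show "\<phi> x * \<phi> (-x) = \<phi> (-1)" using sq1[OF x] by (simp add: algebra_simps)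
    qed
    also have "\<dots> = \<phi> (-1) * of_nat (CARD('a) - 1)" by (simp add: card_Diff_singleton mult.commute)
    finally show ?thesis .
  qed
  have B: "(\<Sum>a\<in>UNIV-{0,1}. \<phi> a * \<phi> (1-a)) = - \<phi> (-1)"
  proof -
    have "(\<Sum>a\<in>UNIV-{0,1}. \<phi> a * \<phi> (1-a)) = (\<Sum>a\<in>UNIV-{0,1::'a}. \<phi> (a / (1 - a)))"
    proof (rule sum.cong[OF refl])
      fix a :: 'a assume a: "a \<in> UNIV - {0,1}"
      then have "1 - a \<noteq> 0" "inverse (1 - a) \<noteq> 0" by auto
      then have "\<phi> (a * inverse (1 - a)) = \<phi> a * \<phi> (inverse (1 - a))" using mc a by (simp add: mult_char_def)
      then show "\<phi> a * \<phi> (1-a) = \<phi> (a / (1 - a))"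
        using phi_inv_eq[OF q \<open>1 - a \<noteq> 0\<close>] by (simp add: divide_inverse)
    qed
    also have "\<dots> = (\<Sum>c\<in>UNIV-{0,-1::'a}. \<phi> c)"
    proof (rule sum.reindex_bij_witness[of _ "\<lambda>c. c / (1 + c)" "\<lambda>a. a / (1 - a)"])
      fix a :: 'a assume a: "a \<in> UNIV - {0,1}"
      then have a1: "1 - a \<noteq> 0" by simp
      show "a / (1 - a) / (1 + a / (1 - a)) = a" using a1 by (simp add: field_simps)
      show "a / (1 - a) \<in> UNIV - {0, -1}"
      proof -
        have "a / (1 - a) \<noteq> 0" using a a1 by simp
        moreover have "a / (1 - a) \<noteq> -1"
        proof
          assume "a / (1 - a) = -1"
          then have "a = - (1 - a)" using a1 by (simp add: field_simps)
          then show False by simp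
        qed
        ultimately show ?thesis by simp
      qed
      show "\<phi> (a / (1 - a)) = \<phi> (a / (1 - a))" by simp
    next
      fix c :: 'a assume c: "c \<in> UNIV - {0,-1}"
      then have c1: "1 + c \<noteq> 0" by (metis DiffI add.commute add_eq_0_iff insertCI UNIV_I c DiffD2)
      show "c / (1 + c) / (1 - c / (1 + c)) = c" using c1 by (simp add: field_simps)
      show "c / (1 + c) \<in> UNIV - {0, 1}"
      proof -
        have "c / (1 + c) \<noteq> 0" using c c1 by simp
        moreover have "c / (1 + c) \<noteq> 1"
        proof
          assume "c / (1 + c) = 1"
          then have "c = 1 + c" using c1 by (simp add: field_simps)
          then show False by simp
        qed
        ultimately show ?thesis by simp
      qed
    qed
    also have "\<dots> = (\<Sum>c\<in>UNIV-{0::'a}. \<phi> c) - \<phi> (-1)"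
    proof -
      have "(\<Sum>c\<in>UNIV-{0::'a}. \<phi> c) = \<phi> (-1) + (\<Sum>c\<in>UNIV-{0::'a}-{-1}. \<phi> c)"
        by (rule sum.remove) auto
      moreover have "UNIV-{0::'a}-{-1} = UNIV-{0,-1}" by auto
      ultimately show ?thesis by simp
    qed
    also have "(\<Sum>c\<in>UNIV-{0::'a}. \<phi> c) = 0"
    proof -
      obtain a :: 'a where "a \<noteq> 0" "\<phi> a \<noteq> 1" using q unfolding quad_char_def by blast
      then show ?thesis by (rule mc_sum_nontriv[OF mc])
    qed
    finally show ?thesis by simp
  qed
  have C: "(\<Sum>s\<in>UNIV-{0}. \<phi> s * \<phi> s * addchar \<zeta> s) = -1"
  proof -
    have "(\<Sum>s\<in>UNIV-{0}. \<phi> s * \<phi> s * addchar \<zeta> s) = (\<Sum>s\<in>UNIV-{0::'a}. addchar \<zeta> s)"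
      by (rule sum.cong) (auto simp: sq1)
    then show ?thesis using addchar_sum_nz[OF z1 z2] by simp
  qed
  have "gauss_sum \<zeta> \<phi> * gauss_sum \<zeta> \<phi> = \<phi> (-1) * of_nat (CARD('a) - 1) + \<phi> (-1)"
    using gauss_core[OF mc mc] A B C by simp
  also have "\<dots> = \<phi> (-1) * of_nat CARD('a)"
    using ff_card_ge2[where 'a='a] by (simp add: of_nat_diff algebra_simps)
  finally show ?thesis .
qed

lemma gauss_phi_nz:
  assumes q: "quad_char (\<phi> :: 'a \<Rightarrow> complex)"
  shows "gauss_sum \<zeta> \<phi> \<noteq> 0"
proof
  assume "gauss_sum \<zeta> \<phi> = 0"
  then have "\<phi> (-1) * of_nat CARD('a) = 0" using gauss_phi_sq[OF q] by simp
  moreover have "\<phi> (-1) \<noteq> 0" using q mc_nz[of \<phi> "-1::'a"] by (simp add: quad_char_def)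
  ultimately show False by simp
qed

end

lemma sum_lists_prod:
  fixes S :: "'b set" and h :: "'b \<Rightarrow> 'c::comm_semiring_1"
  shows "(\<Sum>xs\<in>{xs. length xs = d \<and> (\<forall>x\<in>set xs. x \<in> S)}. prod_list (map h xs)) = (\<Sum>x\<in>S. h x) ^ d"
proof (induction d)
  case 0
  have "{xs. length xs = 0 \<and> (\<forall>x\<in>set xs. x \<in> S)} = {[]}" by auto
  then show ?case by simp
next
  case (Suc d)
  let ?L = "\<lambda>d. {xs. length xs = d \<and> (\<forall>x\<in>set xs. x \<in> S)}"
  have eq: "?L (Suc d) = (\<lambda>(x, ys). x # ys) ` (S \<times> ?L d)"
    by (auto simp: length_Suc_conv image_iff)
  have inj: "inj_on (\<lambda>(x, ys). x # ys) (S \<times> ?L d)" by (auto intro: inj_onI)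
  have "(\<Sum>xs\<in>?L (Suc d). prod_list (map h xs)) = (\<Sum>(x, ys)\<in>S \<times> ?L d. h x * prod_list (map h ys))"
    unfolding eq by (subst sum.reindex[OF inj]) (simp add: case_prod_beta)
  also have "\<dots> = (\<Sum>x\<in>S. h x) * (\<Sum>ys\<in>?L d. prod_list (map h ys))"
    by (simp add: sum_product sum.cartesian_product)
  finally show ?case using Suc by simp
qed

lemma sum_1N:
  fixes N :: nat and F :: "nat \<Rightarrow> 'b::ab_group_add"
  shows "(\<Sum>m\<in>{1..N}. F m) = (\<Sum>m<N. F m) - F 0 + F N"
proof (induction N)
  case 0 then show ?case by simp
next
  case (Suc N) then show ?case by (simp add: algebra_simps)
qed

lemma t2: "(y::'a::field) - 4 \<noteq> 0 \<Longrightarrow> (4::'a) \<noteq> 0 \<Longrightarrow> 4 * (y / (y - 4)) / (4 / (y - 4)) = y"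
proof -
  assume y4: "y - 4 \<noteq> 0" and f: "(4::'a) \<noteq> 0"
  have "4 * (y/(y-4)) / (4/(y-4)) = (4 * (y/(y-4)) * (y-4)) / 4" by (simp only: divide_divide_eq_right)
  also have "4 * (y/(y-4)) * (y-4) = 4 * y" using y4 by simp
  also have "4 * y / 4 = y" using f by simp
  finally show ?thesis .
qed
lemma t2b: "(y::'a::field) - 4 \<noteq> 0 \<Longrightarrow> (4::'a) \<noteq> 0 \<Longrightarrow> 4 * (y / (y - 4)) / (y / (y - 4) - 1) = y"
proof -
  assume y4: "y - 4 \<noteq> 0" and f: "(4::'a) \<noteq> 0"
  have "y / (y - 4) - 1 = 4 / (y - 4)" using y4 by (simp add: field_simps)
  then show ?thesis using y4 f by (simp add: t2)
qed

lemma t3: "(y::'a::field) - 4 \<noteq> 0 \<Longrightarrow> (4::'a) \<noteq> 0 \<Longrightarrow> (-4) * (y / (y - 4)) * inverse (1 - y / (y - 4)) = y"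
proof -
  assume y4: "y - 4 \<noteq> 0" and f: "(4::'a) \<noteq> 0"
  have oa: "1 - y / (y - 4) = (-4) / (y - 4)" using y4 by (simp add: field_simps)
  have "(-4) * (y / (y - 4)) * inverse (1 - y / (y - 4)) = (-4) * (y / (y - 4)) * ((y - 4) / (-4))"
    unfolding oa by (simp only: inverse_divide)
  also have "\<dots> = (y / (y - 4)) * (y - 4)" using f by simp
  also have "\<dots> = y" using y4 by simp
  finally show ?thesis .
qed

lemma mc3:
  assumes "mult_char \<chi>" "(x::'a::{finite,field}) \<noteq> 0" "y \<noteq> 0" "z \<noteq> 0"
  shows "\<chi> (x * y * z) = \<chi> x * \<chi> y * \<chi> z"
proof -
  have h: "\<forall>a b. a \<noteq> 0 \<longrightarrow> b \<noteq> 0 \<longrightarrow> \<chi> (a * b) = \<chi> a * \<chi> b"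
    using assms(1) unfolding mult_char_def by blast
  have "x * y \<noteq> 0" using assms by simp
  then have "\<chi> (x * y * z) = \<chi> (x * y) * \<chi> z" using h assms(4) by blast
  also have "\<chi> (x * y) = \<chi> x * \<chi> y" using h assms(2,3) by blast
  finally show ?thesis .
qed

context
  fixes \<omega> \<phi> :: "'a::{finite,field} \<Rightarrow> complex"
  assumes odd: "odd CARD('a)"
    and gen: "char_generator \<omega>"
    and quad: "quad_char \<phi>"
begin

lemma mcw: "mult_char \<omega>" using gen by (simp add: char_generator_def)
lemma mcp: "mult_char \<phi>" using quad by (simp add: quad_char_def)

definition W :: "'a \<Rightarrow> complex" where "W y = (if y = 0 then 0 else \<omega> y)"

lemma W_mult: "W (a * b) = W a * W b"
  using mcw by (auto simp: W_def mult_char_def)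

lemma W_prod: "W (prod_list (map f xs)) = prod_list (map (\<lambda>x. W (f x)) xs)"
proof (induction xs)
  case Nil then show ?case using mcw by (simp add: W_def mult_char_def)
next
  case (Cons x xs) then show ?case by (simp add: W_mult)
qed

lemma indicator_char:
  assumes c: "c \<noteq> 0"
  shows "(if y = c then 1 else 0) =
    (\<Sum>m\<in>{1..CARD('a) - 1}. (W y * inverse (\<omega> c)) ^ m) / of_nat (CARD('a) - 1)"
proof -
  let ?N = "CARD('a) - 1"
  have N0: "?N > 0" using ff_card_ge2[where 'a='a] by simp
  show ?thesis
  proof (cases "y = 0")
    case True
    then have "(\<Sum>m\<in>{1..?N}. (W y * inverse (\<omega> c)) ^ m) = 0"
      by (intro sum.neutral) (auto simp: W_def)
    then show ?thesis using True c by simp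
  next
    case False
    let ?u = "y * inverse c"
    have u0: "?u \<noteq> 0" using False c by simp
    have w: "W y * inverse (\<omega> c) = \<omega> ?u"
      using False c mcw mc_inv[OF mcw c] by (simp add: W_def mult_char_def)
    have wN: "\<omega> ?u ^ ?N = 1" by (rule mc_N[OF mcw u0])
    have "(\<Sum>m\<in>{1..?N}. \<omega> ?u ^ m) = (\<Sum>m<?N. \<omega> ?u ^ m)"
      using sum_1N[of "\<lambda>m. \<omega> ?u ^ m" ?N] wN by simp
    also have "\<dots> = (if ?u = 1 then of_nat ?N else 0)" by (rule omega_orth[OF gen u0])
    also have "(?u = 1) = (y = c)" using c by (auto simp: field_simps)
    finally show ?thesis unfolding w using N0 by simp
  qed
qed

definition A :: "nat \<Rightarrow> complex" where
  "A m = (\<Sum>a\<in>UNIV-{0,1::'a}. (\<phi> a * \<omega> a ^ m) * inverse (\<omega> (1 - a)) ^ m)"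

lemma A_eq: "A m = (\<Sum>a\<in>UNIV-{0,1::'a}. (\<phi> a * \<omega> a ^ m) * inverse (\<omega> (1 - a)) ^ m)"
  by (simp add: A_def)

lemma phi_sum: "(\<Sum>a\<in>UNIV-{0,1::'a}. \<phi> a) = -1"
proof -
  have "(\<Sum>c\<in>UNIV-{0::'a}. \<phi> c) = \<phi> 1 + (\<Sum>c\<in>UNIV-{0::'a}-{1}. \<phi> c)"
    by (rule sum.remove) auto
  moreover have "UNIV-{0::'a}-{1} = UNIV-{0,1}" by auto
  moreover have "(\<Sum>c\<in>UNIV-{0::'a}. \<phi> c) = 0"
  proof -
    obtain a :: 'a where "a \<noteq> 0" "\<phi> a \<noteq> 1" using quad unfolding quad_char_def by blast
    then show ?thesis by (rule mc_sum_nontriv[OF mcp])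
  qed
  moreover have "\<phi> 1 = 1" using mcp by (simp add: mult_char_def)
  ultimately show ?thesis by (simp add: eq_neg_iff_add_eq_0 add.commute)
qed

lemma A_N: "A (CARD('a) - 1) = -1"
proof -
  have "A (CARD('a) - 1) = (\<Sum>a\<in>UNIV-{0,1::'a}. \<phi> a)"
    unfolding A_def
  proof (rule sum.cong[OF refl])
    fix a :: 'a assume a: "a \<in> UNIV - {0,1}"
    then have "1 - a \<noteq> 0" by simp
    then show "\<phi> a * \<omega> a ^ (CARD('a) - 1) * inverse (\<omega> (1 - a)) ^ (CARD('a) - 1) = \<phi> a"
      using mc_N[OF mcw] a by (simp add: power_inverse)
  qed
  then show ?thesis using phi_sum by simp
qed

lemma A_0: "A 0 = -1"
  unfolding A_def using phi_sum by simp

lemma four_nz: "(4::'a) \<noteq> 0"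
proof -
  have "(4::'a) = 2 * 2" by simp
  then show ?thesis using two_nz[OF odd] by (metis mult_eq_0_iff)
qed

lemma fiber_card:
  assumes y0: "y \<noteq> 0"
  shows "card {x\<in>UNIV-{0::'a}. x + 2 + inverse x = y} = card {z. z ^ 2 = y * (y - 4)}"
proof -
  have two: "(2::'a) \<noteq> 0" by (rule two_nz[OF odd])
  let ?h = "\<lambda>x::'a. 2 * x + 2 - y"
  have inj: "inj_on ?h {x\<in>UNIV-{0::'a}. x + 2 + inverse x = y}"
    by (rule inj_onI) (use two in simp)
  have "?h ` {x\<in>UNIV-{0::'a}. x + 2 + inverse x = y} = {z. z ^ 2 = y * (y - 4)}"
  proof (intro equalityI subsetI)
    fix z assume "z \<in> ?h ` {x\<in>UNIV-{0::'a}. x + 2 + inverse x = y}"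
    then obtain x where x: "x \<noteq> 0" "x + 2 + inverse x = y" and z: "z = ?h x" by auto
    from x have "x * x + 2 * x + 1 = y * x" by (simp add: field_simps)
    have "(2 * x + 2 - y) ^ 2 = 4 * (x * x + 2 * x + 1) - 4 * (y * x) + y * y - 4 * y"
      by (simp add: power2_eq_square algebra_simps)
    also have "\<dots> = y * (y - 4)" using \<open>x * x + 2 * x + 1 = y * x\<close> by (simp add: algebra_simps)
    finally show "z \<in> {z. z ^ 2 = y * (y - 4)}" unfolding z by simp
  next
    fix z assume "z \<in> {z. z ^ 2 = y * (y - 4)}"
    then have z: "z * z = y * y - 4 * y" by (simp add: power2_eq_square algebra_simps)
    define x where "x = (z + y - 2) / 2"
    have zx: "z = 2 * x + 2 - y" using two by (simp add: x_def field_simps)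
    have eq: "4 * (x * x + 2 * x + 1) = 4 * (y * x)"
      using z unfolding zx by (simp add: algebra_simps)
    then have eq': "x * x + 2 * x + 1 = y * x" using mult_left_cancel[OF four_nz] by blast
    have x0: "x \<noteq> 0"
    proof
      assume "x = 0"
      then show False using eq' by simp
    qed
    have "x + 2 + inverse x = y" using eq' x0 by (simp add: field_simps)
    then show "z \<in> ?h ` {x\<in>UNIV-{0::'a}. x + 2 + inverse x = y}" using x0 zx by auto
  qed
  then show ?thesis using card_image[OF inj] by simp
qed

lemma T_formula:
  assumes m: "1 \<le> m" "m \<le> CARD('a) - 1"
  shows "(\<Sum>x\<in>UNIV-{0::'a}. W (x + 2 + inverse x) ^ m) =
     \<omega> (-4) ^ m * A m + (if m = CARD('a) - 1 then of_nat (CARD('a) - 1) else 0)"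
proof -
  let ?S = "UNIV - {0::'a}"
  let ?f = "\<lambda>x::'a. x + 2 + inverse x"
  let ?c = "\<lambda>y. of_nat (card {x\<in>?S. ?f x = y}) :: complex"
  let ?N = "CARD('a) - 1"
  have "(\<Sum>x\<in>?S. W (?f x) ^ m) = (\<Sum>x\<in>?S. \<Sum>y\<in>UNIV. if ?f x = y then W y ^ m else 0)"
    by simp
  also have "\<dots> = (\<Sum>y\<in>UNIV. \<Sum>x\<in>?S. if ?f x = y then W y ^ m else 0)"
    by (rule sum.swap)
  also have "\<dots> = (\<Sum>y\<in>UNIV. W y ^ m * ?c y)"
  proof (rule sum.cong[OF refl])
    fix y
    have "(\<Sum>x\<in>?S. if ?f x = y then W y ^ m else 0) = (\<Sum>x\<in>{x\<in>?S. ?f x = y}. W y ^ m)"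
      by (rule sum.inter_filter[symmetric]) simp
    also have "\<dots> = W y ^ m * ?c y" by (simp only: sum_constant mult.commute of_nat_id)
    finally show "(\<Sum>x\<in>?S. if ?f x = y then W y ^ m else 0) = W y ^ m * ?c y" .
  qed
  also have "\<dots> = W 0 ^ m * ?c 0 + (\<Sum>y\<in>UNIV-{0}. W y ^ m * ?c y)"
    by (rule sum.remove) auto
  also have "W 0 ^ m * ?c 0 = 0" using m by (simp add: W_def)
  also have "(\<Sum>y\<in>UNIV-{0}. W y ^ m * ?c y) =
      (\<Sum>y\<in>UNIV-{0}. \<omega> y ^ m * (1 + (if y = 4 then 0 else \<phi> (y * (y - 4)))))"
  proof (rule sum.cong[OF refl])
    fix y :: 'a assume "y \<in> UNIV - {0}"
    then have y0: "y \<noteq> 0" by simp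
    have "?c y = 1 + (if y = 4 then 0 else \<phi> (y * (y - 4)))"
    proof (cases "y = 4")
      case True
      have "{z::'a. z ^ 2 = 0} = {0}" by auto
      then show ?thesis using fiber_card[OF y0] True by simp
    next
      case False
      then have "y * (y - 4) \<noteq> 0" using y0 by simp
      then show ?thesis using fiber_card[OF y0] card_sqrt[OF quad odd] False by simp
    qed
    then show "W y ^ m * ?c y = \<omega> y ^ m * (1 + (if y = 4 then 0 else \<phi> (y * (y - 4))))"
      using y0 by (simp add: W_def)
  qed
  also have "\<dots> = (\<Sum>y\<in>UNIV-{0}. \<omega> y ^ m) + (\<Sum>y\<in>UNIV-{0}. \<omega> y ^ m * (if y = 4 then 0 else \<phi> (y * (y - 4))))"
    by (simp add: distrib_left sum.distrib)
  also have "(\<Sum>y\<in>UNIV-{0}. \<omega> y ^ m) = (if m = ?N then of_nat ?N else 0)"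
  proof (cases "m = ?N")
    case True
    have "(\<Sum>y\<in>UNIV-{0}. \<omega> y ^ m) = (\<Sum>y\<in>UNIV-{0::'a}. 1)"
    proof (rule sum.cong[OF refl])
      fix y :: 'a assume "y \<in> UNIV - {0}"
      then have "y \<noteq> 0" by simp
      then show "\<omega> y ^ m = 1" using True mc_N[OF mcw] by blast
    qed
    then show ?thesis using True by (simp add: card_Diff_singleton)
  next
    case False
    then have "m < ?N" using m by simp
    moreover have "0 < m" using m by simp
    ultimately obtain a :: 'a where a: "a \<noteq> 0" "\<omega> a ^ m \<noteq> 1" using omega_nontriv[OF gen] by blast
    have "(\<Sum>y\<in>UNIV-{0}. \<omega> y ^ m) = 0" by (rule mc_sum_nontriv[OF mc_power[OF mcw] a])
    then show ?thesis using False by simp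
  qed
  also have "(\<Sum>y\<in>UNIV-{0}. \<omega> y ^ m * (if y = 4 then 0 else \<phi> (y * (y - 4)))) =
      (\<Sum>y\<in>UNIV-{0,4}. \<omega> y ^ m * \<phi> (y * (y - 4)))"
    by (rule sum.mono_neutral_cong_right) (auto simp: four_nz)
  also have "\<dots> = (\<Sum>a\<in>UNIV-{0,1}. \<omega> (-4) ^ m * ((\<phi> a * \<omega> a ^ m) * inverse (\<omega> (1 - a)) ^ m))"
  proof (rule sum.reindex_bij_witness[of _ "\<lambda>a. 4 * a / (a - 1)" "\<lambda>y. y / (y - 4)"])
    fix y :: 'a assume y: "y \<in> UNIV - {0, 4}"
    then have y0: "y \<noteq> 0" and y4: "y - 4 \<noteq> 0" by auto
    let ?a = "y / (y - 4)"
    have a0: "?a \<noteq> 0" using y0 y4 by simp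
    show "4 * ?a / (?a - 1) = y" using y4 four_nz by (rule t2b)
    have a1: "?a \<noteq> 1"
    proof
      assume "?a = 1"
      then have "y = y - 4" using y4 by (simp add: field_simps)
      then show False using four_nz by simp
    qed
    show "?a \<in> UNIV - {0, 1}" using a0 a1 by simp
    have oa: "1 - ?a \<noteq> 0" using a1 by simp
    have e1: "(-4) * ?a * inverse (1 - ?a) = y" using y4 four_nz by (rule t3)
    have e2: "y * (y - 4) = ?a * (y - 4) ^ 2" using y4 by (simp add: field_simps power2_eq_square)
    have m4: "(-4::'a) \<noteq> 0" using four_nz by simp
    have "inverse (1 - ?a) \<noteq> 0" using oa by simp
    then have "\<omega> ((-4) * ?a * inverse (1 - ?a)) = \<omega> (-4) * \<omega> ?a * \<omega> (inverse (1 - ?a))"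
      using mc3[OF mcw m4 a0] by blast
    then have "\<omega> ((-4) * ?a * inverse (1 - ?a)) = \<omega> (-4) * \<omega> ?a * inverse (\<omega> (1 - ?a))"
      using mc_inv[OF mcw oa] by simp
    then have "\<omega> y = \<omega> (-4) * \<omega> ?a * inverse (\<omega> (1 - ?a))" using e1 by simp
    moreover have "\<phi> (y * (y - 4)) = \<phi> ?a"
    proof -
      have s0: "(y - 4) ^ 2 \<noteq> 0" using y4 by simp
      have "\<phi> (y * (y - 4)) = \<phi> (?a * (y - 4) ^ 2)" by (simp only: e2)
      also have "\<dots> = \<phi> ?a * \<phi> ((y - 4) ^ 2)" using mcp a0 s0 unfolding mult_char_def by blast
      also have "\<phi> ((y - 4) ^ 2) = 1" by (rule phi_sq[OF quad y4])
      finally show ?thesis by simp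
    qed
    ultimately show "\<omega> (-4) ^ m * (\<phi> ?a * \<omega> ?a ^ m * inverse (\<omega> (1 - ?a)) ^ m) = \<omega> y ^ m * \<phi> (y * (y - 4))"
      by (simp add: power_mult_distrib mult_ac)
  next
    fix a :: 'a assume a: "a \<in> UNIV - {0, 1}"
    then have a0: "a \<noteq> 0" and a1: "a - 1 \<noteq> 0" by auto
    show "4 * a / (a - 1) / (4 * a / (a - 1) - 4) = a" using a1 four_nz by (simp add: field_simps)
    have "4 * a / (a - 1) \<noteq> 0" using a0 a1 four_nz by simp
    moreover have "4 * a / (a - 1) \<noteq> 4"
    proof
      assume "4 * a / (a - 1) = 4"
      then have "4 * a = 4 * (a - 1)" using a1 by (simp add: field_simps)
      then show False using four_nz by (simp add: algebra_simps)
    qed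
    ultimately show "4 * a / (a - 1) \<in> UNIV - {0, 4}" by simp
  qed
  also have "\<dots> = \<omega> (-4) ^ m * A m" by (simp add: A_def sum_distrib_left)
  finally show ?thesis by (simp add: add.commute)
qed

end


lemma final_arith:
  fixes q s u w :: complex
  assumes "q - 1 \<noteq> 0" "w * w = 1"
  shows "(s - w + u) / (q - 1) = (u - w) / (q - 1) - w * (w / (1 - q) * s)"
proof -
  have "1 - q = - (q - 1)" by simp
  then have "w / (1 - q) = - (w / (q - 1))" by (simp only: divide_minus_right)
  then have "w * (w / (1 - q) * s) = - ((w * w) * s / (q - 1))" by (simp add: mult_ac)
  also have "\<dots> = - (s / (q - 1))" using assms(2) by simp
  finally show ?thesis by (simp add: diff_divide_distrib add_divide_distrib)
qed

lemma prod_list_pow: "prod_list (map g xs) ^ m = prod_list (map (\<lambda>x. g x ^ m) xs)"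
  for g :: "'b \<Rightarrow> 'c::comm_monoid_mult"
  by (induction xs) (simp_all add: power_mult_distrib)

theorem theorem4p1:
  fixes \<omega> \<phi> :: "'a::{finite,field} \<Rightarrow> complex"
    and \<zeta> :: complex and d :: nat and t :: 'a
  assumes "odd CARD('a)"
    and "d \<ge> 2"
    and "t \<noteq> 0"
    and "char_generator \<omega>"
    and "quad_char \<phi>"
    and "\<zeta> ^ CHAR('a) = 1" and "\<forall>k. 0 < k \<and> k < CHAR('a) \<longrightarrow> \<zeta> ^ k \<noteq> 1"
  shows "of_nat (card {xs :: 'a list. length xs = d \<and> (\<forall>x\<in>set xs. x \<noteq> 0) \<and>
                  (\<Prod>x\<leftarrow>xs. x + 2 + inverse x) = 4 ^ d * inverse t})
         = ((of_nat CARD('a) - 2) ^ d - (-1) ^ d) / (of_nat CARD('a) - 1)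
           - (-1) ^ d * H_q \<zeta> \<omega> \<phi> d t"
proof -
  note ctx = assms(1) assms(4) assms(5)
  have mcw: "mult_char \<omega>" using assms(4) by (simp add: char_generator_def)
  have mcp: "mult_char \<phi>" using assms(5) by (simp add: quad_char_def)
  let ?N = "CARD('a) - 1"
  have N2: "?N \<ge> 2"
  proof -
    have "CARD('a) \<ge> 2" by (rule ff_card_ge2)
    moreover have "CARD('a) \<noteq> 2" using assms(1) by auto
    ultimately show ?thesis by simp
  qed
  have Nc: "(of_nat ?N :: complex) = of_nat CARD('a) - 1" using N2 by (simp add: of_nat_diff)
  define f where "f = (\<lambda>x::'a. x + 2 + inverse x)"
  define c where "c = (4::'a) ^ d * inverse t"
  define L where "L = {xs::'a list. length xs = d \<and> (\<forall>x\<in>set xs. x \<in> UNIV - {0})}"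
  define v where "v = inverse (\<omega> c)"
  define AA where "AA = A \<omega> \<phi>"
  define B where "B m = AA m ^ d * \<omega> ((-1) ^ d * t) ^ m" for m
  define WW where "WW = W \<omega>"
  have f4: "(4::'a) \<noteq> 0" by (rule four_nz[OF ctx])
  have c0: "c \<noteq> 0" using f4 assms(3) by (simp add: c_def)
  have finL: "finite L"
    by (rule finite_subset[OF _ finite_lists_length_eq[OF finite_class.finite_UNIV, of d]])
       (auto simp: L_def)
  have "{xs :: 'a list. length xs = d \<and> (\<forall>x\<in>set xs. x \<noteq> 0) \<and>
                  (\<Prod>x\<leftarrow>xs. x + 2 + inverse x) = 4 ^ d * inverse t} =
        {xs\<in>L. prod_list (map f xs) = c}" by (auto simp: L_def f_def c_def)
  then have "of_nat (card {xs :: 'a list. length xs = d \<and> (\<forall>x\<in>set xs. x \<noteq> 0) \<and>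
                  (\<Prod>x\<leftarrow>xs. x + 2 + inverse x) = 4 ^ d * inverse t}) =
     (\<Sum>xs\<in>{xs\<in>L. prod_list (map f xs) = c}. (1::complex))" by simp
  also have "\<dots> = (\<Sum>xs\<in>L. if prod_list (map f xs) = c then 1 else 0)"
    by (rule sum.inter_filter[OF finL])
  also have "\<dots> = (\<Sum>xs\<in>L. (\<Sum>m\<in>{1..?N}. (WW (prod_list (map f xs)) * v) ^ m) / of_nat ?N)"
    unfolding v_def WW_def by (rule sum.cong[OF refl]) (rule indicator_char[OF ctx c0])
  also have "\<dots> = (\<Sum>xs\<in>L. \<Sum>m\<in>{1..?N}. v ^ m * WW (prod_list (map f xs)) ^ m) / of_nat ?N"
    by (simp add: sum_divide_distrib power_mult_distrib mult.commute)
  also have "\<dots> = (\<Sum>m\<in>{1..?N}. \<Sum>xs\<in>L. v ^ m * WW (prod_list (map f xs)) ^ m) / of_nat ?N"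
    by (subst sum.swap) (rule refl)
  also have "\<dots> = (\<Sum>m\<in>{1..?N}. v ^ m * (\<Sum>xs\<in>L. WW (prod_list (map f xs)) ^ m)) / of_nat ?N"
    by (simp add: sum_distrib_left)
  also have "\<dots> = (\<Sum>m\<in>{1..?N}. v ^ m * (\<Sum>x\<in>UNIV-{0}. WW (f x) ^ m) ^ d) / of_nat ?N"
  proof -
    have "(\<Sum>xs\<in>L. WW (prod_list (map f xs)) ^ m) = (\<Sum>x\<in>UNIV-{0}. WW (f x) ^ m) ^ d" for m
    proof -
      have "(\<Sum>xs\<in>L. WW (prod_list (map f xs)) ^ m) = (\<Sum>xs\<in>L. prod_list (map (\<lambda>x. WW (f x) ^ m) xs))"
        unfolding WW_def W_prod[OF ctx] prod_list_pow by simp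
      also have "\<dots> = (\<Sum>x\<in>UNIV-{0}. WW (f x) ^ m) ^ d"
        unfolding L_def by (rule sum_lists_prod)
      finally show ?thesis .
    qed
    then show ?thesis by simp
  qed
  also have "\<dots> = (\<Sum>m\<in>{1..?N}. v ^ m * (\<omega> (-4) ^ m * AA m + (if m = ?N then of_nat ?N else 0)) ^ d) / of_nat ?N"
  proof -
    have "(\<Sum>x\<in>UNIV-{0}. WW (f x) ^ m) = \<omega> (-4) ^ m * AA m + (if m = ?N then of_nat ?N else 0)"
      if "m \<in> {1..?N}" for m
      unfolding WW_def AA_def f_def using that by (intro T_formula[OF ctx]) auto
    then show ?thesis by (intro arg_cong[where f = "\<lambda>x. x / _"] sum.cong) auto
  qed
  also have "(\<Sum>m\<in>{1..?N}. v ^ m * (\<omega> (-4) ^ m * AA m + (if m = ?N then of_nat ?N else 0)) ^ d) =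
      (\<Sum>m<?N. v ^ m * (\<omega> (-4) ^ m * AA m + (if m = ?N then of_nat ?N else 0)) ^ d)
      - (AA 0) ^ d + (v ^ ?N * (\<omega> (-4) ^ ?N * AA ?N + of_nat ?N) ^ d)"
    using sum_1N[of "\<lambda>m. v ^ m * (\<omega> (-4) ^ m * AA m + (if m = ?N then of_nat ?N else 0)) ^ d" ?N] N2
    by simp
  also have "(\<Sum>m<?N. v ^ m * (\<omega> (-4) ^ m * AA m + (if m = ?N then of_nat ?N else 0)) ^ d) = (\<Sum>m<?N. B m)"
  proof (rule sum.cong[OF refl])
    fix m assume "m \<in> {..<?N}"
    then have "m \<noteq> ?N" by simp
    have w4: "\<omega> 4 \<noteq> 0" using mc_nz[OF mcw f4] .
    have wt: "\<omega> t \<noteq> 0" using mc_nz[OF mcw assms(3)] .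
    have m1: "(-1::'a) \<noteq> 0" by simp
    have "\<omega> c = \<omega> (4 ^ d) * \<omega> (inverse t)"
      using mcw f4 assms(3) unfolding c_def mult_char_def by simp
    also have "\<dots> = \<omega> 4 ^ d * inverse (\<omega> t)" using mc_pow[OF mcw f4] mc_inv[OF mcw assms(3)] by simp
    finally have wc: "\<omega> c = \<omega> 4 ^ d * inverse (\<omega> t)" .
    have wm4: "\<omega> (-4) = \<omega> (-1) * \<omega> 4" by (rule mc_neg[OF mcw f4])
    have "\<omega> ((-1) ^ d * t) = \<omega> ((-1) ^ d) * \<omega> t"
      using mcw assms(3) unfolding mult_char_def by simp
    also have "\<omega> ((-1) ^ d) = \<omega> (-1) ^ d" by (rule mc_pow[OF mcw m1])
    finally have wmt: "\<omega> ((-1) ^ d * t) = \<omega> (-1) ^ d * \<omega> t" .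
    have key: "v * \<omega> (-4) ^ d = \<omega> ((-1) ^ d * t)"
      unfolding v_def wc wm4 wmt using w4 wt by (simp add: power_mult_distrib field_simps)
    have "v ^ m * (\<omega> (-4) ^ m * AA m + (if m = ?N then of_nat ?N else 0)) ^ d
        = (v * \<omega> (-4) ^ d) ^ m * AA m ^ d"
      using \<open>m \<noteq> ?N\<close> by (simp add: power_mult_distrib power_mult[symmetric] mult.commute mult.left_commute)
    also have "\<dots> = B m" unfolding key B_def by simp
    finally show "v ^ m * (\<omega> (-4) ^ m * AA m + (if m = ?N then of_nat ?N else 0)) ^ d = B m" .
  qed
  also have "AA 0 = -1" unfolding AA_def by (rule A_0[OF ctx])
  also have "v ^ ?N * (\<omega> (-4) ^ ?N * AA ?N + of_nat ?N) ^ d = (of_nat CARD('a) - 2) ^ d"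
  proof -
    have "\<omega> c ^ ?N = 1" by (rule mc_N[OF mcw c0])
    then have "v ^ ?N = 1" unfolding v_def by (simp add: power_inverse)
    moreover have "\<omega> (-4) ^ ?N = 1" using mc_N[OF mcw] f4 by simp
    moreover have "AA ?N = -1" unfolding AA_def by (rule A_N[OF ctx])
    ultimately show ?thesis using Nc by simp
  qed
  finally have lhs: "of_nat (card {xs :: 'a list. length xs = d \<and> (\<forall>x\<in>set xs. x \<noteq> 0) \<and>
                  (\<Prod>x\<leftarrow>xs. x + 2 + inverse x) = 4 ^ d * inverse t}) =
      ((\<Sum>m<?N. B m) - (-1) ^ d + (of_nat CARD('a) - 2) ^ d) / of_nat ?N" .
  have hq: "H_q \<zeta> \<omega> \<phi> d t = (-1) ^ d / (1 - of_nat CARD('a)) * (\<Sum>m<?N. B m)"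
    unfolding H_q_def
  proof (intro arg_cong[where f = "\<lambda>x. _ * x"] sum.cong[OF refl])
    fix m assume "m \<in> {..<?N}"
    define \<chi>1 where "\<chi>1 = (\<lambda>x::'a. \<phi> x * \<omega> x ^ m)"
    define \<chi>2 where "\<chi>2 = (\<lambda>x::'a. inverse (\<omega> x) ^ m)"
    have m1: "mult_char \<chi>1" unfolding \<chi>1_def by (rule mc_mult[OF mcp mc_power[OF mcw]])
    have m2: "mult_char \<chi>2" unfolding \<chi>2_def by (rule mc_invpower[OF mcw])
    have prod: "\<chi>1 x * \<chi>2 x = \<phi> x" if "x \<noteq> 0" for x
      using mc_nz[OF mcw that] unfolding \<chi>1_def \<chi>2_def by (simp add: power_inverse field_simps)
    obtain b :: 'a where b: "b \<noteq> 0" "\<phi> b \<noteq> 1" using assms(5) unfolding quad_char_def by blast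
    have "\<chi>1 b * \<chi>2 b \<noteq> 1" using prod[OF b(1)] b(2) by simp
    from gauss_jacobi[OF assms(6,7) m1 m2 b(1) this]
    have "gauss_sum \<zeta> \<chi>1 * gauss_sum \<zeta> \<chi>2 = AA m * gauss_sum \<zeta> (\<lambda>x. \<chi>1 x * \<chi>2 x)"
      unfolding AA_def A_eq[OF ctx] \<chi>1_def \<chi>2_def by simp
    also have "gauss_sum \<zeta> (\<lambda>x. \<chi>1 x * \<chi>2 x) = gauss_sum \<zeta> \<phi>"
      unfolding gauss_sum_def by (rule sum.cong) (auto simp: prod)
    finally have "gauss_sum \<zeta> \<chi>1 * gauss_sum \<zeta> \<chi>2 / gauss_sum \<zeta> \<phi> = AA m"
      using gauss_phi_nz[OF assms(6,7,5)] by simp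
    then show "(gauss_sum \<zeta> (\<lambda>x. \<phi> x * \<omega> x ^ m) * gauss_sum \<zeta> (\<lambda>x. inverse (\<omega> x) ^ m) / gauss_sum \<zeta> \<phi>) ^ d
        * \<omega> ((-1) ^ d * t) ^ m = B m"
      unfolding B_def \<chi>1_def \<chi>2_def by simp
  qed
  have "(of_nat ?N :: complex) \<noteq> 0" using N2 by simp
  then have q1: "(of_nat CARD('a) :: complex) - 1 \<noteq> 0" using Nc by simp
  have pm: "(-1::complex) ^ d * (-1) ^ d = 1" by (simp add: power_mult_distrib[symmetric])
  show ?thesis
    unfolding lhs hq Nc by (rule final_arith[OF q1 pm])
qed

end
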